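(* Let $k\ge 3$ and let $w$ be a word over $\{a,b\}$. For any occurrence of $u=ba^{k-1}$ in $w$, local position $0$ is forbidden in that occurrence if and only if local position $k-1$ is forbidden in the same occurrence. For any occurrence of $v=b^{k-1}a$ in $w$, local position $0$ is forbidden in that occurrence.
   Context: $\Sigma=\{a,b\}$. For $k\ge 3$, $S_k=\left(\Sigma^k\setminus\{ba^{k-1},b^{k-1}a\}\right)\cup\left(\Sigma^{k-1}\setminus\{a^{k-1},b^{k-1}\}\right)$, $u=ba^{k-1}$, $v=b^{k-1}a$. $\mathit{Pref}(S^* )$ denotes the set of all prefixes of words in $S^*$. For $w=w_1\cdots w_n$, $w[i..j]=w_i\cdots w_j$ (empty if $i>j$). A position $j$, $0\le j\le n-1$, is forbidden in $w$ if $w[j+1..n]\notin\mathit{Pref}(S_k^* )$. An occurrence of $p\in\{u,v\}$ in $w$ is an index $s$ with $w[s+1..s+k]=p$; its local positions are $0,\dots,k-1$, local position $i$ being the position $s+i$ of $w$, and local position $i$ is forbidden in the occurrence if $s+i$ is forbidden in $w$. *)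

theory Defs
  imports Main
begin

datatype letter = a | b

definition Sk :: "nat \<Rightarrow> letter list set" where
  "Sk k = ({w. length w = k} - {b # replicate (k - 1) a, replicate (k - 1) b @ [a]})
        \<union> ({w. length w = k - 1} - {replicate (k - 1) a, replicate (k - 1) b})"

definition u_word :: "nat \<Rightarrow> letter list" where
  "u_word k = b # replicate (k - 1) a"

definition v_word :: "nat \<Rightarrow> letter list" where
  "v_word k = replicate (k - 1) b @ [a]"

definition lang_star :: "'x list set \<Rightarrow> 'x list set" where
  "lang_star S = {concat ws | ws. set ws \<subseteq> S}"

definition Pref :: "'x list set \<Rightarrow> 'x list set" where
  "Pref L = {p. \<exists>s. p @ s \<in> L}"

text \<open>Position j (0 \<le> j \<le> n-1) is forbidden in w iff w[j+1..n] = drop j w is not in Pref(S_k^*).\<close>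
definition forbidden :: "nat \<Rightarrow> letter list \<Rightarrow> nat \<Rightarrow> bool" where
  "forbidden k w j \<longleftrightarrow> j < length w \<and> drop j w \<notin> Pref (lang_star (Sk k))"

text \<open>An occurrence of p in w is an index s with w[s+1..s+|p|] = p.\<close>
definition occurrence :: "letter list \<Rightarrow> letter list \<Rightarrow> nat \<Rightarrow> bool" where
  "occurrence p w s \<longleftrightarrow> s + length p \<le> length w \<and> take (length p) (drop s w) = p"

end

theory Submission
  imports Defs
begin

lemma Sk_len: "w \<in> Sk k \<Longrightarrow> length w = k \<or> length w = k - 1"
  by (auto simp: Sk_def)

lemma pref_cons:
  assumes "p \<in> Sk k" "y \<in> Pref (lang_star (Sk k))"
  shows "p @ y \<in> Pref (lang_star (Sk k))"
proof -
  from assms(2) obtain t ws where "y @ t = concat ws" "set ws \<subseteq> Sk k"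
    by (auto simp: Pref_def lang_star_def)
  then have "(p @ y) @ t = concat (p # ws)" "set (p # ws) \<subseteq> Sk k" using assms(1) by auto
  then show ?thesis unfolding Pref_def lang_star_def by blast
qed

lemma pref_dest:
  assumes "k \<ge> 3" "x \<in> Pref (lang_star (Sk k))" "length x \<ge> k"
  shows "\<exists>w0. w0 \<in> Sk k \<and> w0 = take (length w0) x \<and> drop (length w0) x \<in> Pref (lang_star (Sk k))"
proof -
  from assms(2) obtain t ws where e: "x @ t = concat ws" and s: "set ws \<subseteq> Sk k"
    by (auto simp: Pref_def lang_star_def)
  have "ws \<noteq> []" using e assms by auto
  then obtain w0 ws' where ws: "ws = w0 # ws'" by (cases ws) auto
  have w0S: "w0 \<in> Sk k" using s ws by auto
  have lw: "length w0 \<le> length x" using Sk_len[OF w0S] assms by auto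
  have e2: "x @ t = w0 @ concat ws'" using e ws by simp
  have t1: "w0 = take (length w0) x" using e2 lw
    by (metis append_eq_append_conv_if append_eq_conv_conj take_all_iff take_append)
  have "drop (length w0) x @ t = concat ws'" using e2 lw
    by (metis append_eq_conv_conj drop_append le_iff_add length_append diff_is_0_eq'  drop_0 append_Nil)
  moreover have "set ws' \<subseteq> Sk k" using s ws by auto
  ultimately have "drop (length w0) x \<in> Pref (lang_star (Sk k))"
    unfolding Pref_def lang_star_def by blast
  with w0S t1 show ?thesis by blast
qed

theorem lemma2:
  fixes k :: nat and w :: "letter list"
  assumes "k \<ge> 3"
  shows "(\<forall>s. occurrence (u_word k) w s \<longrightarrow>
            (forbidden k w (s + 0) \<longleftrightarrow> forbidden k w (s + (k - 1))))
       \<and> (\<forall>s. occurrence (v_word k) w s \<longrightarrow> forbidden k w (s + 0))"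
proof (intro conjI allI impI)
  fix s assume occ: "occurrence (u_word k) w s"
  let ?x = "drop s w"
  let ?P = "Pref (lang_star (Sk k))"
  have lu: "length (u_word k) = k" using assms by (simp add: u_word_def)
  have lx: "length ?x \<ge> k" and tx: "take k ?x = u_word k"
    using occ lu by (auto simp: occurrence_def)
  have p0: "b # replicate (k - 2) a \<in> Sk k"
  proof -
    obtain m where "k = Suc (Suc (Suc m))" using assms by (metis add.commute add_Suc_right le_iff_add numeral_3_eq_3 plus_nat.add_0)
    then show ?thesis by (auto simp: Sk_def)
  qed
  have tk1: "take (k - 1) ?x = b # replicate (k - 2) a"
  proof -
    have "take (k - 1) ?x = take (k - 1) (take k ?x)" by simp
    also have "\<dots> = take (k - 1) (b # replicate (k - 1) a)" using tx by (simp add: u_word_def)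
    also have "\<dots> = b # replicate (k - 2) a"
    proof -
      obtain m where "k = Suc (Suc (Suc m))" using assms by (metis add.commute add_Suc_right le_iff_add numeral_3_eq_3 plus_nat.add_0)
      then show ?thesis by (simp add: take_replicate flip: replicate_Suc)
    qed
    finally show ?thesis .
  qed
  have split: "?x = (b # replicate (k - 2) a) @ drop (s + (k - 1)) w"
    using tk1 by (metis append_take_drop_id drop_drop add.commute)
  have "?x \<in> ?P \<longleftrightarrow> drop (s + (k - 1)) w \<in> ?P"
  proof
    assume "?x \<in> ?P"
    from pref_dest[OF assms this lx] obtain w0 where
      w0: "w0 \<in> Sk k" "w0 = take (length w0) ?x" "drop (length w0) ?x \<in> ?P" by blast
    show "drop (s + (k - 1)) w \<in> ?P"
    proof (cases "length w0 = k")
      case True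
      then have "w0 = u_word k" using w0(2) tx by simp
      then show ?thesis using w0(1) by (simp add: Sk_def u_word_def)
    next
      case False
      then have "length w0 = k - 1" using Sk_len[OF w0(1)] by simp
      then show ?thesis using w0(3) by (simp add: add.commute)
    qed
  next
    assume "drop (s + (k - 1)) w \<in> ?P"
    from pref_cons[OF p0 this] show "?x \<in> ?P" using split by simp
  qed
  moreover have "s < length w" "s + (k - 1) < length w" using lx assms by auto
  ultimately show "forbidden k w (s + 0) \<longleftrightarrow> forbidden k w (s + (k - 1))"
    by (simp add: forbidden_def)
next
  fix s assume occ: "occurrence (v_word k) w s"
  let ?x = "drop s w"
  let ?P = "Pref (lang_star (Sk k))"
  have lv: "length (v_word k) = k" using assms by (simp add: v_word_def)
  have lx: "length ?x \<ge> k" and tx: "take k ?x = v_word k"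
    using occ lv by (auto simp: occurrence_def)
  have tk1: "take (k - 1) ?x = replicate (k - 1) b"
  proof -
    have "take (k - 1) ?x = take (k - 1) (take k ?x)" by simp
    also have "\<dots> = take (k - 1) (replicate (k - 1) b @ [a])" using tx by (simp add: v_word_def)
    also have "\<dots> = replicate (k - 1) b" by simp
    finally show ?thesis .
  qed
  have "?x \<notin> ?P"
  proof
    assume "?x \<in> ?P"
    from pref_dest[OF assms this lx] obtain w0 where
      w0: "w0 \<in> Sk k" "w0 = take (length w0) ?x" by blast
    show False
    proof (cases "length w0 = k")
      case True
      then have "w0 = v_word k" using w0(2) tx by simp
      then show ?thesis using w0(1) by (simp add: Sk_def v_word_def)
    next
      case False
      then have "length w0 = k - 1" using Sk_len[OF w0(1)] by simp
      then have "w0 = replicate (k - 1) b" using w0(2) tk1 by simp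
      moreover have "replicate (k - 1) b \<notin> Sk k" using assms by (auto simp: Sk_def)
      ultimately show ?thesis using w0(1) by simp
    qed
  qed
  moreover have "s < length w" using lx assms by auto
  ultimately show "forbidden k w (s + 0)" by (simp add: forbidden_def)
qed

end
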